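(* Let $\beta>0$ and $c>b>0$, and let $(X_t)_{t=0,1,2,\ldots}$ be the discrete-time Markov chain on the nonnegative integers with $X_0=0$ and transition probabilities $$P(k,k+1)=\tfrac12 e^{-\beta c},\qquad P(k,k-1)=\tfrac12 e^{-\beta b},\qquad P(k,k)=1-\tfrac12 e^{-\beta c}-\tfrac12 e^{-\beta b}\quad (k\ge 1),$$ $$P(0,1)=\tfrac12 e^{-\beta c},\qquad P(0,0)=1-\tfrac12 e^{-\beta c},$$ and $P(k,l)=0$ for all other pairs $(k,l)$. For $k\ge1$ define the hitting time $\tau^0_k=\inf\{t\ge 1:\ X_t=k\}$. Then for every $k\ge 1$ and every $\varepsilon>0$, $$\lim_{\beta\to\infty} P\left(e^{\beta c k-\beta b(k-1)-\beta\varepsilon}<\tau^0_k<e^{\beta c k-\beta b(k-1)+\beta\varepsilon}\right)=1 .$$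
   Context: The constants $c>b>0$ are held fixed while $\beta\to\infty$; the law of the chain (and hence of $\tau^0_k$) depends on $\beta$ through the transition probabilities. *)

theory Defs
  imports "HOL-Probability.Probability"
begin

definition trans_prob :: "real \<Rightarrow> real \<Rightarrow> real \<Rightarrow> nat \<Rightarrow> nat \<Rightarrow> real" where
  "trans_prob \<beta> b c k l =
     (if k = 0 then
        (if l = 1 then exp (-\<beta>*c)/2 else if l = 0 then 1 - exp (-\<beta>*c)/2 else 0)
      else
        (if l = k + 1 then exp (-\<beta>*c)/2
         else if l = k - 1 then exp (-\<beta>*b)/2
         else if l = k then 1 - exp (-\<beta>*c)/2 - exp (-\<beta>*b)/2
         else 0))"

text \<open>Transition kernel as a pmf (well-defined when beta > 0 and c > b > 0).\<close>
definition kernel :: "real \<Rightarrow> real \<Rightarrow> real \<Rightarrow> nat \<Rightarrow> nat pmf" where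
  "kernel \<beta> b c k = embed_pmf (\<lambda>l. trans_prob \<beta> b c k l)"

fun path :: "real \<Rightarrow> real \<Rightarrow> real \<Rightarrow> nat \<Rightarrow> nat list pmf" where
  "path \<beta> b c 0 = return_pmf [0]"
| "path \<beta> b c (Suc n) =
     bind_pmf (path \<beta> b c n) (\<lambda>xs. map_pmf (\<lambda>y. xs @ [y]) (kernel \<beta> b c (last xs)))"

definition hit_prob :: "real \<Rightarrow> real \<Rightarrow> real \<Rightarrow> nat \<Rightarrow> nat \<Rightarrow> real" where
  "hit_prob \<beta> b c k t =
     measure_pmf.prob (path \<beta> b c t)
       {xs. xs ! t = k \<and> (\<forall>s. 1 \<le> s \<and> s < t \<longrightarrow> xs ! s \<noteq> k)}"

text \<open>P(lo < tau^0_k < hi), as a sum over the disjoint events {tau^0_k = t}.\<close>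
definition tau_between_prob :: "real \<Rightarrow> real \<Rightarrow> real \<Rightarrow> nat \<Rightarrow> real \<Rightarrow> real \<Rightarrow> real" where
  "tau_between_prob \<beta> b c k lo hi =
     (\<Sum>t \<in> {t::nat. 1 \<le> t \<and> lo < real t \<and> real t < hi}. hit_prob \<beta> b c k t)"

end

theory Submission
  imports Defs
begin


lemma int_cong_pmf:
  fixes f g :: "'a \<Rightarrow> real"
  assumes "\<And>x. x \<in> set_pmf M \<Longrightarrow> f x = g x"
  shows "integral\<^sup>L (measure_pmf M) f = integral\<^sup>L (measure_pmf M) g"
  by (rule integral_cong_AE) (auto simp: AE_measure_pmf_iff assms)

lemma int_mono_pmf:
  fixes f g :: "'a \<Rightarrow> real"
  assumes "finite (set_pmf M)" "\<And>x. x \<in> set_pmf M \<Longrightarrow> f x \<le> g x"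
  shows "integral\<^sup>L (measure_pmf M) f \<le> integral\<^sup>L (measure_pmf M) g"
  by (rule integral_mono_AE) (auto simp: AE_measure_pmf_iff assms integrable_measure_pmf_finite)

lemma int_bind_fin:
  fixes f :: "'b \<Rightarrow> real"
  assumes M: "finite (set_pmf M)" and N: "\<And>x. x \<in> set_pmf M \<Longrightarrow> finite (set_pmf (N x))"
  shows "(\<integral>y. f y \<partial>measure_pmf (bind_pmf M N)) = (\<integral>x. (\<integral>y. f y \<partial>measure_pmf (N x)) \<partial>measure_pmf M)"
proof -
  define A where "A = set_pmf (bind_pmf M N)"
  have fA: "finite A" using M N unfolding A_def set_bind_pmf by (intro finite_UN_I) auto
  have "(\<integral>y. f y \<partial>measure_pmf (bind_pmf M N)) = (\<Sum>a\<in>A. f a * pmf (bind_pmf M N) a)"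
    by (rule integral_measure_pmf_real[OF fA]) (simp add: A_def)
  also have "\<dots> = (\<Sum>a\<in>A. f a * (\<Sum>x\<in>set_pmf M. pmf (N x) a * pmf M x))"
  proof (intro sum.cong refl arg_cong2[where f="(*)"])
    fix a show "pmf (bind_pmf M N) a = (\<Sum>x\<in>set_pmf M. pmf (N x) a * pmf M x)"
      unfolding pmf_bind by (rule integral_measure_pmf_real) (auto simp: M)
  qed
  also have "\<dots> = (\<Sum>x\<in>set_pmf M. (\<Sum>a\<in>A. f a * pmf (N x) a) * pmf M x)"
  proof -
    have "(\<Sum>a\<in>A. f a * (\<Sum>x\<in>set_pmf M. pmf (N x) a * pmf M x)) = (\<Sum>a\<in>A. \<Sum>x\<in>set_pmf M. f a * (pmf (N x) a * pmf M x))"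
      by (simp add: sum_distrib_left)
    also have "\<dots> = (\<Sum>x\<in>set_pmf M. \<Sum>a\<in>A. f a * (pmf (N x) a * pmf M x))"
      by (rule sum.swap)
    also have "\<dots> = (\<Sum>x\<in>set_pmf M. (\<Sum>a\<in>A. f a * pmf (N x) a) * pmf M x)"
      by (simp add: sum_distrib_right mult.assoc mult.left_commute)
    finally show ?thesis .
  qed
  also have "\<dots> = (\<Sum>x\<in>set_pmf M. (\<integral>y. f y \<partial>measure_pmf (N x)) * pmf M x)"
  proof (intro sum.cong refl arg_cong2[where f="(*)"])
    fix x assume x: "x \<in> set_pmf M"
    show "(\<Sum>a\<in>A. f a * pmf (N x) a) = (\<integral>y. f y \<partial>measure_pmf (N x))"
      by (rule integral_measure_pmf_real[OF fA, symmetric]) (use x in \<open>auto simp: A_def\<close>)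
  qed
  also have "\<dots> = (\<integral>x. (\<integral>y. f y \<partial>measure_pmf (N x)) \<partial>measure_pmf M)"
    by (rule integral_measure_pmf_real[symmetric]) (auto simp: M)
  finally show ?thesis .
qed

lemma int_last:
  fixes f :: "nat \<Rightarrow> real"
  assumes M: "finite (set_pmf M)" and I: "finite I" and fI: "\<And>x. f x \<noteq> 0 \<Longrightarrow> x \<in> I"
  shows "(\<integral>xs. f (last xs) \<partial>measure_pmf M) = (\<Sum>i\<in>I. f i * measure_pmf.prob M {xs. last xs = i})"
proof -
  have "\<And>xs. f (last xs) = (\<Sum>i\<in>I. f i * indicator {xs. last xs = i} xs)"
  proof -
    fix xs
    show "f (last xs) = (\<Sum>i\<in>I. f i * indicator {xs. last xs = i} xs)"
    proof (cases "last xs \<in> I")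
      case True
      then have "(\<Sum>i\<in>I. f i * indicator {xs. last xs = i} xs) = (\<Sum>i\<in>{last xs}. f i * indicator {xs. last xs = i} xs)"
        by (intro sum.mono_neutral_right I) (auto simp: indicator_def)
      then show ?thesis by (simp add: indicator_def)
    next
      case False
      then have "f (last xs) = 0" using fI by blast
      moreover have "(\<Sum>i\<in>I. f i * indicator {xs. last xs = i} xs) = 0"
        using False by (intro sum.neutral) (auto simp: indicator_def)
      ultimately show ?thesis by simp
    qed
  qed
  then have "(\<integral>xs. f (last xs) \<partial>measure_pmf M) = (\<integral>xs. (\<Sum>i\<in>I. f i * indicator {xs. last xs = i} xs) \<partial>measure_pmf M)"
    by simp
  also have "\<dots> = (\<Sum>i\<in>I. (\<integral>xs. f i * indicator {xs. last xs = i} xs \<partial>measure_pmf M))"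
    using M by (simp add: integrable_measure_pmf_finite)
  also have "\<dots> = (\<Sum>i\<in>I. f i * measure_pmf.prob M {xs. last xs = i})"
    by simp
  finally show ?thesis .
qed



context
  fixes \<beta> b c :: real and k :: nat
  assumes bpos: "0 < b" and bc: "b < c" and bet: "0 < \<beta>" and k1: "1 \<le> k"
begin

abbreviation "pp \<equiv> exp (-\<beta>*c)/2"
abbreviation "qq \<equiv> exp (-\<beta>*b)/2"
abbreviation "T \<equiv> trans_prob \<beta> b c"
abbreviation "K \<equiv> kernel \<beta> b c"
abbreviation "Pth \<equiv> path \<beta> b c"

lemma pq: "0 < pp" "pp < qq" "qq < 1/2"
proof -
  show "0 < pp" by simp
  have "-\<beta>*c < -\<beta>*b" using bet bc by simp
  then show "pp < qq" by simp
  have "-\<beta>*b < 0" using bet bpos by simp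
  then show "qq < 1/2" by simp
qed

lemma exp_le1: "exp (- (\<beta> * c)) \<le> 1" "exp (- (\<beta> * b)) \<le> 1"
  using bet bpos bc by auto

lemma T_nonneg: "0 \<le> T i l"
proof -
  have a: "exp (- (\<beta> * c))/2 \<le> 1/2" "exp (- (\<beta> * b))/2 \<le> 1/2" using exp_le1 by auto
  have b: "0 < exp (- (\<beta> * c))/2" "0 < exp (- (\<beta> * b))/2" by auto
  show ?thesis unfolding trans_prob_def using a b by (simp only: mult_minus_left split: if_split) linarith
qed

lemma T_supp: "T i l \<noteq> 0 \<Longrightarrow> l \<in> {i-1, i, i+1}"
  by (auto simp: trans_prob_def split: if_splits)

lemma T_supp2: "T i l \<noteq> 0 \<Longrightarrow> i \<in> {l-1, l, l+1}"
  by (auto simp: trans_prob_def split: if_splits)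

lemma T_sum: "(\<Sum>l\<in>{i-1, i, i+1}. T i l) = 1"
proof (cases "i = 0")
  case True
  then show ?thesis by (simp add: trans_prob_def)
next
  case False
  then have "{i-1, i, i+1} = insert (i-1) (insert i {i+1})" by auto
  moreover have "i - 1 \<noteq> i" "i - 1 \<noteq> i + 1" "i \<noteq> i+1" using False by auto
  ultimately show ?thesis using False by (simp add: trans_prob_def)
qed

lemma T_nn: "(\<integral>\<^sup>+l. ennreal (T i l) \<partial>count_space UNIV) = 1"
proof -
  have "(\<integral>\<^sup>+l. ennreal (T i l) \<partial>count_space UNIV) = (\<Sum>l\<in>{i-1, i, i+1}. ennreal (T i l))"
  proof (rule nn_integral_count_space')
    fix l assume "l \<notin> {i-1, i, i+1}"
    then have "T i l = 0" using T_supp by blast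
    then show "ennreal (T i l) = 0" by simp
  qed auto
  also have "\<dots> = ennreal (\<Sum>l\<in>{i-1, i, i+1}. T i l)"
    by (rule sum_ennreal) (simp add: T_nonneg)
  finally show ?thesis by (simp only: T_sum ennreal_1)
qed

lemma pmf_K: "pmf (K i) l = T i l"
  unfolding kernel_def by (rule pmf_embed_pmf) (auto simp: T_nonneg T_nn)

lemma set_K: "set_pmf (K i) \<subseteq> {i-1, i, i+1}"
  using T_supp by (auto simp: set_pmf_eq pmf_K)

lemma int_K: "(\<integral>y. g y \<partial>measure_pmf (K i)) = (\<Sum>l\<in>{i-1, i, i+1}. g l * T i l)"
  by (subst integral_measure_pmf_real[where A="{i-1, i, i+1}"]) (use set_K in \<open>auto simp: pmf_K\<close>)

lemma path_supp: "xs \<in> set_pmf (Pth n) \<Longrightarrow> length xs = Suc n \<and> xs ! 0 = 0 \<and> (\<forall>s<n. xs ! Suc s \<le> xs ! s + 1)"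
proof (induction n arbitrary: xs)
  case 0
  then show ?case by simp
next
  case (Suc n)
  then obtain ys y where ys: "ys \<in> set_pmf (Pth n)" and y: "y \<in> set_pmf (K (last ys))" and xs: "xs = ys @ [y]"
    by auto
  have IH: "length ys = Suc n" "ys ! 0 = 0" "\<forall>s<n. ys ! Suc s \<le> ys ! s + 1" using Suc.IH[OF ys] by auto
  have "ys \<noteq> []" using IH(1) by auto
  then have ly: "last ys = ys ! n" using IH(1) by (simp add: last_conv_nth)
  have "y \<le> last ys + 1" using y set_K by fastforce
  show ?case
  proof (intro conjI allI impI)
    show "length xs = Suc (Suc n)" using xs IH by simp
    show "xs ! 0 = 0" using xs IH by (simp add: nth_append)
    fix s assume "s < Suc n"
    then show "xs ! Suc s \<le> xs ! s + 1"
    proof (cases "s < n")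
      case True
      then show ?thesis using xs IH by (auto simp: nth_append)
    next
      case False
      then have "s = n" using \<open>s < Suc n\<close> by simp
      then show ?thesis using xs IH \<open>y \<le> last ys + 1\<close> ly by (auto simp: nth_append)
    qed
  qed
qed

lemma finite_path: "finite (set_pmf (Pth n))"
proof (induction n)
  case 0
  then show ?case by simp
next
  case (Suc n)
  have "finite (set_pmf (K i))" for i using set_K by (rule finite_subset) auto
  then show ?case using Suc by simp
qed

lemma int_path_Suc:
  fixes F :: "nat list \<Rightarrow> real"
  shows "(\<integral>xs. F xs \<partial>measure_pmf (Pth (Suc n))) = (\<integral>ys. (\<integral>y. F (ys @ [y]) \<partial>measure_pmf (K (last ys))) \<partial>measure_pmf (Pth n))"
proof -
  have fk: "finite (set_pmf (K i))" for i using set_K by (rule finite_subset) auto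
  show ?thesis
    by (simp only: path.simps, subst int_bind_fin) (auto simp: finite_path fk)
qed


lemma T_up: "T i (Suc i) = pp" by (simp add: trans_prob_def)
lemma T_stay: "0 < i \<Longrightarrow> T i i = 1 - pp - qq"
proof -
  assume "0 < i" then have "i \<noteq> i - 1" "i \<noteq> i + 1" by auto
  then show ?thesis using \<open>0 < i\<close> by (simp add: trans_prob_def)
qed
lemma T_down: "0 < i \<Longrightarrow> T i (i - 1) = qq"
proof -
  assume "0 < i" then have "i - 1 \<noteq> i + 1" by auto
  then show ?thesis using \<open>0 < i\<close> by (simp add: trans_prob_def)
qed
lemma T_00: "T 0 0 = 1 - pp" by (simp add: trans_prob_def)

definition "mm n j = measure_pmf.prob (Pth n) {xs. last xs = j}"
abbreviation "rho \<equiv> pp / qq"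

lemma rho_pos: "0 < rho" and rho_le1: "rho \<le> 1"
  using pq by auto

lemma mm_rec: "mm (Suc n) j = (\<Sum>i\<in>{j-1, j, j+1}. T i j * mm n i)"
proof -
  have "mm (Suc n) j = (\<integral>xs. indicator {xs. last xs = j} xs \<partial>measure_pmf (Pth (Suc n)))"
    by (simp add: mm_def)
  also have "\<dots> = (\<integral>ys. (\<integral>y. indicator {xs. last xs = j} (ys @ [y]) \<partial>measure_pmf (K (last ys))) \<partial>measure_pmf (Pth n))"
    by (rule int_path_Suc)
  also have "\<dots> = (\<integral>ys. T (last ys) j \<partial>measure_pmf (Pth n))"
  proof -
    have "\<And>ys. (\<lambda>y. indicator {xs. last xs = j} (ys @ [y]) :: real) = indicator {j}"
      by (auto simp: indicator_def)
    then show ?thesis by (simp add: measure_pmf_single pmf_K)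
  qed
  also have "\<dots> = (\<Sum>i\<in>{j-1, j, j+1}. T i j * mm n i)"
    unfolding mm_def by (rule int_last) (auto simp: finite_path dest: T_supp2)
  finally show ?thesis .
qed

lemma mm_nonneg: "0 \<le> mm n j"
  by (simp add: mm_def)

lemma t1: "mm 0 j = (if j = 0 then 1 else 0)" by (simp add: mm_def indicator_def)
lemma t2: "mm (Suc n) 0 = T 0 0 * mm n 0 + T 1 0 * mm n 1"
  by (simp add: mm_rec)

lemma mm_bound: "mm n j \<le> rho ^ j"
proof (induction n arbitrary: j)
  case 0
  then show ?case using rho_pos by (simp add: t1)
next
  case (Suc n)
  show ?case
  proof (cases "j = 0")
    case True
    have "mm (Suc n) 0 \<le> T 0 0 * 1 + T 1 0 * rho"
      unfolding t2 using Suc.IH[of 0] Suc.IH[of 1] T_nonneg[of 0 0] T_nonneg[of 1 0]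
      by (intro add_mono mult_left_mono) auto
    also have "\<dots> = 1" using pq(1,2) by (simp add: trans_prob_def)
    finally show ?thesis using True by simp
  next
    case False
    have d: "j - 1 \<noteq> j" "j - 1 \<noteq> j + 1" "j \<noteq> j+1" using False by auto
    have "mm (Suc n) j = T (j-1) j * mm n (j-1) + T j j * mm n j + T (j+1) j * mm n (j+1)"
      unfolding mm_rec using d by simp
    also have "\<dots> \<le> T (j-1) j * rho^(j-1) + T j j * rho^j + T (j+1) j * rho^(j+1)"
      using Suc.IH[of "j-1"] Suc.IH[of j] Suc.IH[of "j+1"] T_nonneg[of "j-1" j] T_nonneg[of j j] T_nonneg[of "j+1" j]
      by (intro add_mono mult_left_mono) auto
    also have "\<dots> = pp * rho^(j-1) + (1 - pp - qq) * rho^j + qq * rho^(j+1)"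
    proof -
      have "T (j-1) j = pp" using T_up[of "j-1"] False by simp
      moreover have "T (j+1) j = qq" using T_down[of "j+1"] by simp
      ultimately show ?thesis using T_stay[of j] False by (simp only:)
    qed
    also have "\<dots> = rho^j"
    proof -
      have e1: "rho^j = rho^(j-1) * rho" using False by (cases j) auto
      have "pp * rho^(j-1) = qq * rho^j" unfolding e1 using pq by simp
      moreover have "qq * rho^(j+1) = pp * rho^j" using pq by simp
      ultimately show ?thesis by (simp add: algebra_simps)
    qed
    finally show ?thesis .
  qed
qed

definition "noHit n xs \<longleftrightarrow> (\<forall>s. 1 \<le> s \<and> s \<le> n \<longrightarrow> xs ! s \<noteq> k)"

lemma last_path: "xs \<in> set_pmf (Pth n) \<Longrightarrow> last xs = xs ! n"
  using path_supp[of xs n] by (cases xs rule: rev_cases) auto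

lemma noHit_lt: "xs \<in> set_pmf (Pth n) \<Longrightarrow> noHit n xs \<Longrightarrow> s \<le> n \<Longrightarrow> xs ! s < k"
proof (induction s)
  case 0
  then show ?case using path_supp[of xs n] k1 by simp
next
  case (Suc s)
  then have "xs ! Suc s \<le> xs ! s + 1" using path_supp[of xs n] by auto
  moreover have "xs ! Suc s \<noteq> k" using Suc.prems by (auto simp: noHit_def)
  ultimately show ?case using Suc by auto
qed

lemma noHit_last: "xs \<in> set_pmf (Pth n) \<Longrightarrow> noHit n xs \<Longrightarrow> last xs < k"
  using noHit_lt[of xs n n] last_path by simp

lemma noHit_app: assumes ys: "ys \<in> set_pmf (Pth n)" shows "noHit (Suc n) (ys @ [y]) \<longleftrightarrow> noHit n ys \<and> y \<noteq> k"
proof -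
  have len: "length ys = Suc n" using path_supp ys by blast
  have e1: "(ys @ [y]) ! s = ys ! s" if "s \<le> n" for s using that len by (simp add: nth_append)
  have e2: "(ys @ [y]) ! Suc n = y" using len by (simp add: nth_append)
  show ?thesis unfolding noHit_def
  proof
    assume H: "\<forall>s. 1 \<le> s \<and> s \<le> Suc n \<longrightarrow> (ys @ [y]) ! s \<noteq> k"
    have "y \<noteq> k" using H[rule_format, of "Suc n"] e2 by auto
    moreover have "\<forall>s. 1 \<le> s \<and> s \<le> n \<longrightarrow> ys ! s \<noteq> k"
    proof (intro allI impI)
      fix s assume "1 \<le> s \<and> s \<le> n"
      then show "ys ! s \<noteq> k" using H[rule_format, of s] e1[of s] by auto
    qed
    ultimately show "(\<forall>s. 1 \<le> s \<and> s \<le> n \<longrightarrow> ys ! s \<noteq> k) \<and> y \<noteq> k" by blast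
  next
    assume H: "(\<forall>s. 1 \<le> s \<and> s \<le> n \<longrightarrow> ys ! s \<noteq> k) \<and> y \<noteq> k"
    show "\<forall>s. 1 \<le> s \<and> s \<le> Suc n \<longrightarrow> (ys @ [y]) ! s \<noteq> k"
    proof (intro allI impI)
      fix s assume s: "1 \<le> s \<and> s \<le> Suc n"
      show "(ys @ [y]) ! s \<noteq> k"
      proof (cases "s = Suc n")
        case True then show ?thesis using H e2 by auto
      next
        case False then show ?thesis using H s e1[of s] by auto
      qed
    qed
  qed
qed

definition "hitset t = {xs. xs ! t = k \<and> (\<forall>s. 1 \<le> s \<and> s < t \<longrightarrow> xs ! s \<noteq> k)}"

lemma hitset_app: "ys \<in> set_pmf (Pth n) \<Longrightarrow> ys @ [y] \<in> hitset (Suc n) \<longleftrightarrow> y = k \<and> noHit n ys"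
  using path_supp[of ys n] unfolding noHit_def hitset_def
  by (auto simp: nth_append less_Suc_eq_le)


definition "UU n = measure_pmf.prob (Pth n) {xs. noHit n xs}"

lemma hit_eq: "hit_prob \<beta> b c k t = measure_pmf.prob (Pth t) (hitset t)"
  by (simp add: hit_prob_def hitset_def)

lemma U_rec: "UU (Suc n) + hit_prob \<beta> b c k (Suc n) = UU n"
proof -
  have "UU (Suc n) + hit_prob \<beta> b c k (Suc n) = (\<integral>xs. indicator {xs. noHit (Suc n) xs} xs + indicator (hitset (Suc n)) xs \<partial>measure_pmf (Pth (Suc n)))"
    by (subst Bochner_Integration.integral_add) (auto simp: UU_def hit_eq simp del: path.simps intro!: integrable_measure_pmf_finite finite_path)
  also have "\<dots> = (\<integral>ys. (\<integral>y. indicator {xs. noHit (Suc n) xs} (ys @ [y]) + indicator (hitset (Suc n)) (ys @ [y]) \<partial>measure_pmf (K (last ys))) \<partial>measure_pmf (Pth n))"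
    by (rule int_path_Suc)
  also have "\<dots> = (\<integral>ys. indicator {xs. noHit n xs} ys \<partial>measure_pmf (Pth n))"
  proof (rule int_cong_pmf)
    fix ys assume ys: "ys \<in> set_pmf (Pth n)"
    have eq: "(\<lambda>y. indicator {xs. noHit (Suc n) xs} (ys @ [y]) + indicator (hitset (Suc n)) (ys @ [y]) :: real) = (\<lambda>y. indicator {xs. noHit n xs} ys)"
      using noHit_app[OF ys] hitset_app[OF ys] by (auto simp: indicator_def)
    show "(\<integral>y. indicator {xs. noHit (Suc n) xs} (ys @ [y]) + indicator (hitset (Suc n)) (ys @ [y]) \<partial>measure_pmf (K (last ys))) = (indicator {xs. noHit n xs} ys :: real)"
      by (subst eq) simp
  qed
  also have "\<dots> = UU n" by (simp add: UU_def)
  finally show ?thesis .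
qed

lemma T_to_k: "i < k \<Longrightarrow> T i k = (if i = k - 1 then pp else 0)"
proof (cases "i = k - 1")
  case True
  assume "i < k"
  then have "k = Suc i" using True by simp
  then have "T i k = T i (Suc i)" by simp
  then show ?thesis using True T_up[of i] by simp
next
  case False
  assume "i < k"
  then have "k \<noteq> i + 1" "k \<noteq> i - 1" "k \<noteq> i" using False by auto
  then show ?thesis using False k1 by (simp add: trans_prob_def)
qed

lemma hit_le: "hit_prob \<beta> b c k (Suc n) \<le> pp * rho ^ (k - 1)"
proof -
  have "hit_prob \<beta> b c k (Suc n) = (\<integral>xs. indicator (hitset (Suc n)) xs \<partial>measure_pmf (Pth (Suc n)))"
    by (simp add: hit_eq)
  also have "\<dots> = (\<integral>ys. (\<integral>y. indicator (hitset (Suc n)) (ys @ [y]) \<partial>measure_pmf (K (last ys))) \<partial>measure_pmf (Pth n))"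
    by (rule int_path_Suc)
  also have "\<dots> = (\<integral>ys. indicator {xs. noHit n xs} ys * T (last ys) k \<partial>measure_pmf (Pth n))"
  proof (rule int_cong_pmf)
    fix ys assume ys: "ys \<in> set_pmf (Pth n)"
    have eq: "(\<lambda>y. indicator (hitset (Suc n)) (ys @ [y]) :: real) = (\<lambda>y. indicator {xs. noHit n xs} ys * indicator {k} y)"
      using hitset_app[OF ys] by (auto simp: indicator_def)
    show "(\<integral>y. indicator (hitset (Suc n)) (ys @ [y]) \<partial>measure_pmf (K (last ys))) = (indicator {xs. noHit n xs} ys :: real) * T (last ys) k"
      by (subst eq) (simp add: measure_pmf_single pmf_K)
  qed
  also have "\<dots> \<le> (\<integral>ys. pp * indicator {xs. last xs = k - 1} ys \<partial>measure_pmf (Pth n))"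
  proof (rule int_mono_pmf[OF finite_path])
    fix ys assume ys: "ys \<in> set_pmf (Pth n)"
    show "indicator {xs. noHit n xs} ys * T (last ys) k \<le> pp * indicator {xs. last xs = k - 1} ys"
    proof (cases "noHit n ys")
      case True
      then have "last ys < k" using noHit_last[OF ys] by simp
      then show ?thesis using True T_to_k[of "last ys"] by (simp add: indicator_def)
    next
      case False
      then show ?thesis using pq by (simp add: indicator_def)
    qed
  qed
  also have "\<dots> = pp * mm n (k - 1)" by (simp add: mm_def)
  also have "\<dots> \<le> pp * rho ^ (k - 1)" using mm_bound pq by (intro mult_left_mono) auto
  finally show ?thesis .
qed

lemma UU_0: "UU 0 = 1"
  by (simp add: UU_def noHit_def)

lemma hit_sum: "(\<Sum>t\<in>{1..N}. hit_prob \<beta> b c k t) + UU N = 1"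
proof (induction N)
  case 0
  then show ?case by (simp add: UU_0)
next
  case (Suc N)
  have "(\<Sum>t\<in>{1..Suc N}. hit_prob \<beta> b c k t) = (\<Sum>t\<in>{1..N}. hit_prob \<beta> b c k t) + hit_prob \<beta> b c k (Suc N)"
    by (simp add: sum.cl_ivl_Suc)
  then show ?case using Suc U_rec[of N] by simp
qed


abbreviation "rr \<equiv> 2 * qq / pp"
definition "dd i = (1 / pp) * rr ^ i"
definition "hh j = (\<Sum>i\<in>{j..<k}. dd i)"

lemma rr_ge1: "1 \<le> rr"
proof -
  have "pp \<le> 2*qq" using pq by linarith
  then show ?thesis using pq(1) by (subst le_divide_eq_1_pos) auto
qed

lemma dd_ge: "1 \<le> dd i"
proof -
  have "1 \<le> rr ^ i" using rr_ge1 by simp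
  moreover have "1 \<le> 1 / pp"
  proof -
    have "pp \<le> 1" using pq by linarith
    then show ?thesis using pq(1) by (subst le_divide_eq_1_pos) auto
  qed
  ultimately show ?thesis unfolding dd_def by (metis mult_mono' mult_1 zero_le_one)
qed

lemma dd_nonneg: "0 \<le> dd i" using dd_ge[of i] by simp

lemma hh_split: "j < k \<Longrightarrow> hh j = dd j + hh (Suc j)"
  unfolding hh_def by (simp add: sum.atLeast_Suc_lessThan)

lemma hh_k: "k \<le> j \<Longrightarrow> hh j = 0"
  unfolding hh_def by simp

lemma hh_nonneg: "0 \<le> hh j"
  unfolding hh_def by (intro sum_nonneg dd_nonneg)

lemma hh_ge1: "j < k \<Longrightarrow> 1 \<le> hh j"
  using hh_split[of j] dd_ge[of j] hh_nonneg[of "Suc j"] by simp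

lemma hh_le0: "hh j \<le> hh 0"
  unfolding hh_def by (intro sum_mono2) (auto simp: dd_nonneg)

lemma hh_step: "i < k \<Longrightarrow> (\<Sum>l\<in>{i-1, i, i+1}. hh l * T i l) \<le> hh i - 1"
proof (cases "i = 0")
  case True
  assume "i < k"
  have "(\<Sum>l\<in>{i-1, i, i+1}. hh l * T i l) = hh 0 * (1 - pp) + hh 1 * pp"
    using True T_00 T_up[of 0] by simp
  also have "\<dots> = hh 0 - pp * (hh 0 - hh 1)" by (simp add: algebra_simps)
  also have "hh 0 - hh 1 = dd 0" using hh_split[of 0] k1 by simp
  also have "pp * dd 0 = 1" using pq by (simp add: dd_def)
  finally show ?thesis using True by simp
next
  case False
  assume ik: "i < k"
  have d: "i - 1 \<noteq> i" "i - 1 \<noteq> i + 1" "i \<noteq> i+1" using False by auto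
  have "(\<Sum>l\<in>{i-1, i, i+1}. hh l * T i l) = hh (i-1) * T i (i-1) + hh i * T i i + hh (i+1) * T i (i+1)"
    using d by simp
  also have "\<dots> = hh (i-1) * qq + hh i * (1 - pp - qq) + hh (i+1) * pp"
  proof -
    have a: "T i (i-1) = qq" using T_down[of i] False by simp
    have b2: "T i i = 1 - pp - qq" using T_stay[of i] False by simp
    have c2: "T i (i+1) = pp" using T_up[of i] by simp
    show ?thesis by (simp only: a b2 c2)
  qed
  also have "\<dots> = hh i + (qq * dd (i-1) - pp * dd i)"
  proof -
    have "hh (i-1) = dd (i-1) + hh i" using hh_split[of "i-1"] ik False by simp
    moreover have "hh i = dd i + hh (i+1)" using hh_split[of i] ik by simp
    ultimately show ?thesis by (simp add: algebra_simps)
  qed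
  also have "\<dots> \<le> hh i - 1"
  proof -
    define X where "X = rr ^ (i - 1)"
    have X1: "1 \<le> X" unfolding X_def using rr_ge1 by simp
    have "rr ^ i = X * rr" unfolding X_def using False by (cases i) auto
    then have "dd i = X * rr / pp" "dd (i-1) = X / pp" by (simp_all add: dd_def X_def)
    then have "qq * dd (i-1) - pp * dd i = - qq * X / pp" using pq by (simp add: field_simps)
    also have "\<dots> \<le> -1"
    proof -
      have "qq * 1 \<le> qq * X" using X1 pq by (intro mult_left_mono) auto
      then have "pp \<le> qq * X" using pq by linarith
      then show ?thesis using pq by (simp add: field_simps)
    qed
    finally show ?thesis by simp
  qed
  finally show ?thesis .
qed

definition "WW n = (\<integral>xs. indicator {xs. noHit n xs} xs * hh (last xs) \<partial>measure_pmf (Pth n))"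

lemma UU_int: "UU n = (\<integral>xs. indicator {xs. noHit n xs} xs \<partial>measure_pmf (Pth n))"
  by (simp add: UU_def)

lemma W_step: "WW (Suc n) \<le> WW n - UU n"
proof -
  have "WW (Suc n) = (\<integral>ys. (\<integral>y. indicator {xs. noHit (Suc n) xs} (ys @ [y]) * hh (last (ys @ [y])) \<partial>measure_pmf (K (last ys))) \<partial>measure_pmf (Pth n))"
    unfolding WW_def by (rule int_path_Suc)
  also have "\<dots> \<le> (\<integral>ys. indicator {xs. noHit n xs} ys * (hh (last ys) - 1) \<partial>measure_pmf (Pth n))"
  proof (rule int_mono_pmf[OF finite_path])
    fix ys assume ys: "ys \<in> set_pmf (Pth n)"
    have eq: "(\<lambda>y. indicator {xs. noHit (Suc n) xs} (ys @ [y]) * hh (last (ys @ [y])) :: real) = (\<lambda>y. (indicator {xs. noHit n xs} ys :: real) * hh y)"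
    proof
      fix y
      have hk: "hh k = 0" using hh_k[of k] by simp
      show "indicator {xs. noHit (Suc n) xs} (ys @ [y]) * hh (last (ys @ [y])) = (indicator {xs. noHit n xs} ys :: real) * hh y"
      proof (cases "y = k")
        case True
        then show ?thesis using hk by simp
      next
        case False
        then show ?thesis using noHit_app[OF ys, of y] by (simp add: indicator_def)
      qed
    qed
    have "(\<integral>y. indicator {xs. noHit (Suc n) xs} (ys @ [y]) * hh (last (ys @ [y])) \<partial>measure_pmf (K (last ys))) = (indicator {xs. noHit n xs} ys :: real) * (\<integral>y. hh y \<partial>measure_pmf (K (last ys)))"
      by (subst eq) simp
    also have "\<dots> = (indicator {xs. noHit n xs} ys :: real) * (\<Sum>l\<in>{last ys - 1, last ys, last ys + 1}. hh l * T (last ys) l)"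
      by (simp add: int_K)
    also have "\<dots> \<le> indicator {xs. noHit n xs} ys * (hh (last ys) - 1)"
    proof (cases "noHit n ys")
      case True
      then show ?thesis using hh_step[of "last ys"] noHit_last[OF ys] by simp
    qed simp
    finally show "(\<integral>y. indicator {xs. noHit (Suc n) xs} (ys @ [y]) * hh (last (ys @ [y])) \<partial>measure_pmf (K (last ys))) \<le> indicator {xs. noHit n xs} ys * (hh (last ys) - 1)" .
  qed
  also have "\<dots> = WW n - UU n"
    unfolding WW_def UU_int right_diff_distrib mult_1_right
    by (rule Bochner_Integration.integral_diff) (auto intro!: integrable_measure_pmf_finite finite_path)
  finally show ?thesis .
qed

lemma W_le: "WW n \<le> hh 0 * UU n"
proof -
  have "WW n \<le> (\<integral>xs. hh 0 * indicator {xs. noHit n xs} xs \<partial>measure_pmf (Pth n))"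
    unfolding WW_def
    by (rule int_mono_pmf[OF finite_path]) (auto simp: indicator_def hh_le0)
  also have "\<dots> = hh 0 * UU n" by (simp add: UU_def)
  finally show ?thesis .
qed

lemma U_le_W: "UU n \<le> WW n"
  unfolding WW_def UU_int
  by (rule int_mono_pmf[OF finite_path]) (auto simp: indicator_def intro: hh_ge1 noHit_last)

lemma hh0_ge1: "1 \<le> hh 0" using hh_ge1 k1 by simp

lemma W_bound: "WW n \<le> hh 0 * (1 - 1 / hh 0) ^ n"
proof (induction n)
  case 0
  have "WW 0 = hh 0" by (simp add: WW_def noHit_def)
  then show ?case by simp
next
  case (Suc n)
  have h: "0 < hh 0" using hh0_ge1 by simp
  have "WW (Suc n) \<le> WW n - UU n" by (rule W_step)
  also have "\<dots> \<le> WW n - WW n / hh 0" using W_le[of n] h by (simp add: field_simps)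
  also have "\<dots> = WW n * (1 - 1 / hh 0)" by (simp add: algebra_simps)
  also have "\<dots> \<le> hh 0 * (1 - 1 / hh 0) ^ n * (1 - 1 / hh 0)"
    using Suc.IH hh0_ge1 by (intro mult_right_mono) (auto simp: field_simps)
  finally show ?case by (simp add: mult_ac)
qed

lemma U_bound: "UU n \<le> hh 0 * (1 - 1 / hh 0) ^ n"
  using U_le_W W_bound order_trans by blast

lemma hh0_bound: "hh 0 \<le> real k * dd (k - 1)"
proof -
  have "hh 0 \<le> (\<Sum>i\<in>{0..<k}. dd (k - 1))"
    unfolding hh_def dd_def using pq rr_ge1
    by (intro sum_mono mult_left_mono power_increasing) auto
  then show ?thesis by simp
qed


abbreviation "DD \<equiv> c * real k - b * (real k - 1)"

lemma rho_exp: "rho = exp (-(\<beta> * (c - b)))"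
proof -
  have "rho = exp (-(\<beta>*c)) / exp (-(\<beta>*b))" by simp
  also have "\<dots> = exp (-(\<beta>*c) - -(\<beta>*b))" by (rule exp_diff[symmetric])
  finally show ?thesis by (simp add: algebra_simps)
qed

lemma rr_exp: "rr = 2 * exp (\<beta> * (c - b))"
proof -
  have "rr = 2 * (exp (-(\<beta>*b)) / exp (-(\<beta>*c)))" by simp
  also have "exp (-(\<beta>*b)) / exp (-(\<beta>*c)) = exp (-(\<beta>*b) - -(\<beta>*c))" by (rule exp_diff[symmetric])
  finally show ?thesis by (simp add: algebra_simps)
qed

lemma pp_rho: "pp * rho ^ (k - 1) = exp (-(\<beta> * DD)) / 2"
proof -
  have rk: "real (k - 1) = real k - 1" using k1 by simp
  have "rho ^ (k - 1) = exp (real (k - 1) * (-(\<beta> * (c - b))))"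
    unfolding rho_exp by (rule exp_of_nat_mult[symmetric])
  then have "pp * rho ^ (k - 1) = exp (-(\<beta>*c)) * exp (real (k - 1) * (-(\<beta> * (c - b)))) / 2"
    by simp
  also have "\<dots> = exp (-(\<beta>*c) + real (k - 1) * (-(\<beta> * (c - b)))) / 2"
    by (simp only: exp_add)
  also have "-(\<beta>*c) + real (k - 1) * (-(\<beta> * (c - b))) = -(\<beta> * DD)"
    unfolding rk by (simp add: algebra_simps)
  finally show ?thesis .
qed

lemma dd_k: "dd (k - 1) = 2 ^ k * exp (\<beta> * DD)"
proof -
  have rk: "real (k - 1) = real k - 1" using k1 by simp
  have kk: "(2::real) ^ k = 2 * 2 ^ (k - 1)" using k1 by (cases k) auto
  have "rr ^ (k - 1) = 2 ^ (k - 1) * exp (real (k - 1) * (\<beta> * (c - b)))"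
    unfolding rr_exp by (simp add: power_mult_distrib exp_of_nat_mult)
  moreover have "1 / pp = 2 * exp (\<beta> * c)" by (simp add: exp_minus field_simps)
  ultimately have "dd (k - 1) = 2 * exp (\<beta> * c) * (2 ^ (k - 1) * exp (real (k - 1) * (\<beta> * (c - b))))"
    unfolding dd_def by simp
  also have "\<dots> = 2 ^ k * exp (\<beta> * c + real (k - 1) * (\<beta> * (c - b)))"
    unfolding kk by (simp add: exp_add)
  also have "\<beta> * c + real (k - 1) * (\<beta> * (c - b)) = \<beta> * DD"
    unfolding rk by (simp add: algebra_simps)
  finally show ?thesis .
qed


lemma hit_nonneg: "0 \<le> hit_prob \<beta> b c k t" by (simp add: hit_prob_def)
lemma UU_nonneg: "0 \<le> UU n" by (simp add: UU_def)

lemma key: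
  fixes \<epsilon> :: real
  assumes eps: "0 < \<epsilon>"
  shows "\<bar>tau_between_prob \<beta> b c k (exp (\<beta>*c*real k - \<beta>*b*(real k - 1) - \<beta>*\<epsilon>))
             (exp (\<beta>*c*real k - \<beta>*b*(real k - 1) + \<beta>*\<epsilon>)) - 1\<bar>
         \<le> (real k * 2^k) * exp (\<beta>*DD) * exp 1 * exp (- exp (\<beta>*\<epsilon>) / (real k * 2^k)) + exp (-(\<beta>*\<epsilon>)) / 2"
proof -
  define E where "E = exp (\<beta>*DD)"
  define Kc where "Kc = real k * 2^k"
  define lo where "lo = exp (\<beta>*c*real k - \<beta>*b*(real k - 1) - \<beta>*\<epsilon>)"
  define hi where "hi = exp (\<beta>*c*real k - \<beta>*b*(real k - 1) + \<beta>*\<epsilon>)"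
  have ex: "\<beta>*c*real k - \<beta>*b*(real k - 1) = \<beta>*DD" by (simp add: algebra_simps)
  have lo_eq: "lo = E * exp (-(\<beta>*\<epsilon>))" unfolding lo_def E_def ex by (subst exp_add[symmetric]) simp
  have hi_eq: "hi = E * exp (\<beta>*\<epsilon>)" unfolding hi_def E_def ex by (simp add: exp_add)
  have Epos: "0 < E" by (simp add: E_def)
  have hipos: "0 < hi" and lopos: "0 < lo" by (simp_all add: hi_def lo_def)
  have "exp (-(\<beta>*\<epsilon>)) < exp (\<beta>*\<epsilon>)" using eps bet by simp
  then have lohi: "lo < hi" unfolding lo_eq hi_eq using Epos by simp
  define N where "N = nat \<lceil>hi\<rceil> - 1"
  have "0 < \<lceil>hi\<rceil>" using hipos by simp
  then have ceil1: "1 \<le> \<lceil>hi\<rceil>" by linarith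
  have Nhi: "real t < hi \<longleftrightarrow> t \<le> N" for t
  proof -
    have "real t < hi \<longleftrightarrow> int t < \<lceil>hi\<rceil>" by (simp add: less_ceiling_iff)
    also have "\<dots> \<longleftrightarrow> t \<le> N" unfolding N_def using ceil1 by linarith
    finally show ?thesis .
  qed
  have realN: "hi - 1 \<le> real N"
  proof -
    have "int N = \<lceil>hi\<rceil> - 1" unfolding N_def using ceil1 by linarith
    then have "real N = real_of_int (\<lceil>hi\<rceil> - 1)" by (metis of_int_of_nat_eq)
    then have "real N = real_of_int \<lceil>hi\<rceil> - 1" by simp
    then show ?thesis by linarith
  qed
  define L where "L = {t::nat. 1 \<le> t \<and> real t \<le> lo}"
  have Lsub: "L \<subseteq> {1..N}"
  proof
    fix t assume "t \<in> L"
    then have "1 \<le> t" "real t < hi" unfolding L_def using lohi by auto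
    then show "t \<in> {1..N}" using Nhi[of t] by simp
  qed
  have finL: "finite L" using Lsub finite_subset by blast
  have S: "{t. 1 \<le> t \<and> lo < real t \<and> real t < hi} = {1..N} - L"
  proof (rule set_eqI)
    fix t
    show "t \<in> {t. 1 \<le> t \<and> lo < real t \<and> real t < hi} \<longleftrightarrow> t \<in> {1..N} - L"
      using Nhi[of t] unfolding L_def by auto
  qed
  let ?h = "hit_prob \<beta> b c k"
  have tau_eq: "tau_between_prob \<beta> b c k lo hi = 1 - UU N - sum ?h L"
  proof -
    have "tau_between_prob \<beta> b c k lo hi = sum ?h ({1..N} - L)"
      unfolding tau_between_prob_def S ..
    also have "\<dots> = sum ?h {1..N} - sum ?h L" by (rule sum_diff[OF _ Lsub]) simp
    also have "sum ?h {1..N} = 1 - UU N" using hit_sum[of N] by simp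
    finally show ?thesis .
  qed
  have Lb: "sum ?h L \<le> exp (-(\<beta>*\<epsilon>)) / 2"
  proof -
    have "sum ?h L \<le> of_nat (card L) * (pp * rho ^ (k - 1))"
    proof (rule sum_bounded_above)
      fix t assume "t \<in> L"
      then have "t = Suc (t - 1)" unfolding L_def by simp
      then show "?h t \<le> pp * rho ^ (k - 1)" using hit_le[of "t - 1"] by simp
    qed
    also have "\<dots> \<le> lo * (pp * rho ^ (k - 1))"
    proof (rule mult_right_mono)
      have "L \<subseteq> {1..nat \<lfloor>lo\<rfloor>}"
      proof
        fix t assume "t \<in> L"
        then have t: "1 \<le> t" "real t \<le> lo" unfolding L_def by auto
        then have "int t \<le> \<lfloor>lo\<rfloor>" by (simp add: le_floor_iff)
        then show "t \<in> {1..nat \<lfloor>lo\<rfloor>}" using t by auto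
      qed
      then have "card L \<le> nat \<lfloor>lo\<rfloor>" using card_mono[of "{1..nat \<lfloor>lo\<rfloor>}" L] by simp
      then have "real (card L) \<le> real (nat \<lfloor>lo\<rfloor>)" by simp
      also have "\<dots> \<le> lo" using lopos by linarith
      finally show "real (card L) \<le> lo" .
      show "0 \<le> pp * rho ^ (k - 1)" using pq by simp
    qed
    also have "\<dots> = (E * exp (-(\<beta>*DD))) * exp (-(\<beta>*\<epsilon>)) / 2"
      unfolding pp_rho lo_eq by (simp only: mult_ac times_divide_eq_right)
    also have "E * exp (-(\<beta>*DD)) = 1" unfolding E_def by (simp add: exp_minus)
    also have "1 * exp (-(\<beta>*\<epsilon>)) / 2 = exp (-(\<beta>*\<epsilon>)) / 2" by simp
    finally show ?thesis .
  qed
  have Ub: "UU N \<le> Kc * E * exp 1 * exp (- exp (\<beta>*\<epsilon>) / Kc)"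
  proof -
    define H where "H = hh 0"
    have H1: "1 \<le> H" using hh0_ge1 by (simp add: H_def)
    have HK: "H \<le> Kc * E" using hh0_bound unfolding H_def dd_k Kc_def E_def by simp
    have KE1: "1 \<le> Kc * E" using H1 HK by simp
    have "UU N \<le> H * (1 - 1 / H) ^ N" using U_bound[of N] by (simp add: H_def)
    also have "\<dots> \<le> H * exp (- (1 / H)) ^ N"
    proof (intro mult_left_mono power_mono)
      show "1 - 1 / H \<le> exp (- (1 / H))" using exp_ge_add_one_self[of "- (1/H)"] by simp
      show "0 \<le> 1 - 1 / H" using H1 by simp
    qed (use H1 in simp)
    also have "\<dots> = H * exp (- (real N / H))"
      by (simp add: exp_of_nat_mult[symmetric])
    also have "\<dots> \<le> (Kc * E) * exp (- (real N / (Kc * E)))"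
    proof (intro mult_mono)
      have "real N / (Kc * E) \<le> real N / H" using H1 HK by (intro divide_left_mono) auto
      then show "exp (- (real N / H)) \<le> exp (- (real N / (Kc * E)))" by simp
    qed (use HK H1 in auto)
    also have "\<dots> \<le> (Kc * E) * exp (1 - exp (\<beta>*\<epsilon>) / Kc)"
    proof (intro mult_left_mono)
      have "(hi - 1) / (Kc * E) \<le> real N / (Kc * E)" using realN KE1 by (intro divide_right_mono) auto
      moreover have "(hi - 1) / (Kc * E) = exp (\<beta>*\<epsilon>) / Kc - 1 / (Kc * E)"
      proof -
        have Kpos: "0 < Kc" unfolding Kc_def using k1 by simp
        show ?thesis unfolding hi_eq using Epos Kpos by (simp add: field_simps)
      qed
      moreover have "1 / (Kc * E) \<le> 1" using KE1 by simp
      ultimately have "- (real N / (Kc * E)) \<le> 1 - exp (\<beta>*\<epsilon>) / Kc" by linarith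
      then show "exp (- (real N / (Kc * E))) \<le> exp (1 - exp (\<beta>*\<epsilon>) / Kc)" by simp
    qed (use KE1 in simp)
    also have "\<dots> = Kc * E * exp 1 * exp (- exp (\<beta>*\<epsilon>) / Kc)"
      by (simp add: exp_diff exp_minus field_simps)
    finally show ?thesis .
  qed
  have "\<bar>tau_between_prob \<beta> b c k lo hi - 1\<bar> = UU N + sum ?h L"
    unfolding tau_eq using UU_nonneg[of N] sum_nonneg[of L ?h] hit_nonneg by auto
  also have "\<dots> \<le> Kc * E * exp 1 * exp (- exp (\<beta>*\<epsilon>) / Kc) + exp (-(\<beta>*\<epsilon>)) / 2"
    using Ub Lb by simp
  finally show ?thesis unfolding lo_def hi_def Kc_def E_def .
qed

end


lemma exp_neg_lim:
  fixes a C :: real assumes a: "0 < a"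
  shows "((\<lambda>x. C * exp (-(x*a))) \<longlongrightarrow> 0) at_top"
proof -
  have "filterlim (\<lambda>x. x * a) at_top at_top"
    by (rule filterlim_at_top_mult_tendsto_pos[OF tendsto_const a filterlim_ident])
  then have "filterlim (\<lambda>x. -(x * a)) at_bot at_top"
    by (simp add: filterlim_uminus_at_top)
  then have "((\<lambda>x. exp (-(x*a))) \<longlongrightarrow> 0) at_top"
    by (rule filterlim_compose[OF exp_at_bot])
  then show ?thesis using tendsto_mult_right_zero by blast
qed

lemma bound1:
  fixes D \<epsilon> Kc \<beta> :: real
  assumes eps: "0 < \<epsilon>" and K: "0 < Kc" and bt: "0 \<le> \<beta>"
  shows "Kc * exp (\<beta>*D) * exp 1 * exp (- exp (\<beta>*\<epsilon>) / Kc) \<le> (Kc * exp (1 + (D+1)^2*Kc/(2*\<epsilon>^2))) * exp (-(\<beta>*1))"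
proof -
  define a where "a = \<epsilon>^2 / (2*Kc)"
  have apos: "0 < a" unfolding a_def using eps K by simp
  have x0: "0 \<le> \<beta>*\<epsilon>" using eps bt by simp
  have q: "(\<beta>*\<epsilon>)^2/2 \<le> exp (\<beta>*\<epsilon>)"
    using exp_lower_Taylor_quadratic[OF x0] x0 by linarith
  have "a * \<beta>^2 = (\<beta>*\<epsilon>)^2/2 / Kc" unfolding a_def using K by (simp add: field_simps power2_eq_square)
  also have "\<dots> \<le> exp (\<beta>*\<epsilon>) / Kc" by (rule divide_right_mono[OF q]) (use K in simp)
  finally have q2: "a * \<beta>^2 \<le> exp (\<beta>*\<epsilon>) / Kc" .
  have "0 \<le> (2*a*\<beta> - (D+1))^2" by simp
  moreover have "(2*a*\<beta> - (D+1))^2 = (D+1)^2 - 4*a*((D+1)*\<beta> - a*\<beta>^2)"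
    by (simp add: power2_eq_square ring_distribs)
  ultimately have "4*a*((D+1)*\<beta> - a*\<beta>^2) \<le> (D+1)^2" by linarith
  then have sq: "(D+1)*\<beta> - a*\<beta>^2 \<le> (D+1)^2/(4*a)" using apos by (simp add: le_divide_eq mult.commute)
  have "(D+1)^2/(4*a) = (D+1)^2*Kc/(2*\<epsilon>^2)" unfolding a_def using K eps by (simp add: field_simps)
  then have "\<beta>*D + 1 - exp (\<beta>*\<epsilon>) / Kc \<le> (1 + (D+1)^2*Kc/(2*\<epsilon>^2)) + -(\<beta>*1)"
    using sq q2 by (simp only:) (simp add: algebra_simps)
  then have "exp (\<beta>*D + 1 - exp (\<beta>*\<epsilon>) / Kc) \<le> exp ((1 + (D+1)^2*Kc/(2*\<epsilon>^2)) + -(\<beta>*1))"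
    by simp
  then have "Kc * exp (\<beta>*D + 1 - exp (\<beta>*\<epsilon>) / Kc) \<le> Kc * exp ((1 + (D+1)^2*Kc/(2*\<epsilon>^2)) + -(\<beta>*1))"
    using K by simp
  moreover have "exp (\<beta>*D + 1 - exp (\<beta>*\<epsilon>) / Kc) = exp (\<beta>*D) * exp 1 * exp (- exp (\<beta>*\<epsilon>) / Kc)"
    by (simp only: diff_conv_add_uminus exp_add minus_divide_left)
  moreover have "exp ((1 + (D+1)^2*Kc/(2*\<epsilon>^2)) + -(\<beta>*1)) = exp (1 + (D+1)^2*Kc/(2*\<epsilon>^2)) * exp (-(\<beta>*1))"
    by (rule exp_add)
  ultimately show ?thesis by (simp add: mult_ac)
qed

theorem lemma1:
  fixes b c \<epsilon> :: real and k :: nat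
  assumes "0 < b" and "b < c" and "1 \<le> k" and "0 < \<epsilon>"
  shows "((\<lambda>\<beta>. tau_between_prob \<beta> b c k
             (exp (\<beta>*c*real k - \<beta>*b*(real k - 1) - \<beta>*\<epsilon>))
             (exp (\<beta>*c*real k - \<beta>*b*(real k - 1) + \<beta>*\<epsilon>)))
          \<longlongrightarrow> 1) at_top"
proof -
  define D where "D = c * real k - b * (real k - 1)"
  define Kc where "Kc = real k * 2^k"
  define C1 where "C1 = Kc * exp (1 + (D+1)^2*Kc/(2*\<epsilon>^2))"
  have Kpos: "0 < Kc" unfolding Kc_def using assms by simp
  have ev: "eventually (\<lambda>\<beta>. norm (tau_between_prob \<beta> b c k
             (exp (\<beta>*c*real k - \<beta>*b*(real k - 1) - \<beta>*\<epsilon>))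
             (exp (\<beta>*c*real k - \<beta>*b*(real k - 1) + \<beta>*\<epsilon>)) - 1)
        \<le> C1 * exp (-(\<beta>*1)) + (1/2) * exp (-(\<beta>*\<epsilon>))) at_top"
    using eventually_gt_at_top[of "0::real"]
  proof eventually_elim
    case (elim \<beta>)
    have "norm (tau_between_prob \<beta> b c k
             (exp (\<beta>*c*real k - \<beta>*b*(real k - 1) - \<beta>*\<epsilon>))
             (exp (\<beta>*c*real k - \<beta>*b*(real k - 1) + \<beta>*\<epsilon>)) - 1)
        \<le> Kc * exp (\<beta>*D) * exp 1 * exp (- exp (\<beta>*\<epsilon>) / Kc) + exp (-(\<beta>*\<epsilon>)) / 2"
      using key[OF assms(1,2) elim assms(3,4)] unfolding D_def Kc_def by simp
    also have "\<dots> \<le> C1 * exp (-(\<beta>*1)) + (1/2) * exp (-(\<beta>*\<epsilon>))"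
      using bound1[OF assms(4) Kpos, of \<beta> D] elim unfolding C1_def by simp
    finally show ?case .
  qed
  have lim: "((\<lambda>\<beta>. C1 * exp (-(\<beta>*1)) + (1/2) * exp (-(\<beta>*\<epsilon>))) \<longlongrightarrow> 0) at_top"
    using tendsto_add[OF exp_neg_lim[of 1 C1] exp_neg_lim[OF assms(4), of "1/2"]] by simp
  show ?thesis
    by (rule LIM_zero_cancel, rule Lim_null_comparison[OF ev lim])
qed

end
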